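(* Let $k\ge 2$. If $G\in\mathcal{G}_k$ then $\kappa(G)\le\kappa(K_k)$. Moreover this bound is tight, since $K_k\in\mathcal{G}_k$.
   Context: For a graph $G=([n],E)$ and $w\in\mathbb{R}^E$, let $\mathrm{ip}(G,w)=\max_{x\in\{\pm1\}^n}\sum_{ij\in E}w_{ij}x_ix_j$ and $\mathrm{sdp}(G,w)=\max\sum_{ij\in E}w_{ij}u_i^Tu_j$, the maximum over unit vectors $u_1,\dots,u_n\in\mathbb{R}^n$; $\kappa(G)=\sup_{w\in\mathbb{R}^E}\mathrm{sdp}(G,w)/\mathrm{ip}(G,w)$. Let $E_n$ be the edge set of $K_n$ and $\mathrm{CUT}_n=\mathrm{conv}\{(x_ix_j)_{ij\in E_n}: x\in\{\pm1\}^n\}$. The support graph of a linear inequality $w^Tx\le\alpha$ on $\mathbb{R}^{E_n}$ is $H=(W,F)$ with $F=\{ij: w_{ij}\ne0\}$ and $W$ the set of nodes covered by $F$; it is supported by at most $k$ points if $|W|\le k$. $\mathcal{R}_k(K_n)$ is the polyhedron defined by all inequalities valid for $\mathrm{CUT}_n$ supported by at most $k$ points. For $G=([n],E)$, $\mathrm{CUT}(G)=\pi_E(\mathrm{CUT}_n)$, $\mathcal{R}_k(G)=\pi_E(\mathcal{R}_k(K_n))$ ($\pi_E$ the coordinate projection to $\mathbb{R}^E$), and $\mathcal{G}_k$ is the class of graphs $G$ with $\mathrm{CUT}(G)=\mathcal{R}_k(G)$. *)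

theory Defs
  imports "HOL-Analysis.Analysis" "HOL-Library.FuncSet"
begin

text \<open>Graphs G = ([n],E): vertices 0..n-1, edges stored as ordered pairs (i,j) with i < j < n.
  Vectors in R^E are functions on pairs; only their values on E matter.\<close>

definition Kedges :: "nat \<Rightarrow> (nat \<times> nat) set" where
  "Kedges n = {(i,j). i < j \<and> j < n}"

definition is_graph :: "nat \<Rightarrow> (nat \<times> nat) set \<Rightarrow> bool" where
  "is_graph n E \<longleftrightarrow> E \<subseteq> Kedges n"

definition signs :: "nat \<Rightarrow> (nat \<Rightarrow> int) set" where
  "signs n = {..<n} \<rightarrow>\<^sub>E {-1, 1}"

definition ip :: "nat \<Rightarrow> (nat \<times> nat) set \<Rightarrow> (nat \<times> nat \<Rightarrow> real) \<Rightarrow> real" where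
  "ip n E w = Max ((\<lambda>x. \<Sum>(i,j)\<in>E. w (i,j) * of_int (x i * x j)) ` signs n)"

definition unit_systems :: "nat \<Rightarrow> (nat \<Rightarrow> nat \<Rightarrow> real) set" where
  "unit_systems n = {u. \<forall>i<n. (\<Sum>k<n. (u i k)\<^sup>2) = 1}"

definition sdp :: "nat \<Rightarrow> (nat \<times> nat) set \<Rightarrow> (nat \<times> nat \<Rightarrow> real) \<Rightarrow> real" where
  "sdp n E w = Sup ((\<lambda>u. \<Sum>(i,j)\<in>E. w (i,j) * (\<Sum>k<n. u i k * u j k)) ` unit_systems n)"

definition kappa :: "nat \<Rightarrow> (nat \<times> nat) set \<Rightarrow> ereal" where
  "kappa n E = (SUP w. ereal (sdp n E w / ip n E w))"

definition cutvec :: "nat \<Rightarrow> (nat \<Rightarrow> int) \<Rightarrow> (nat \<times> nat \<Rightarrow> real)" where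
  "cutvec n x = (\<lambda>(i,j). if (i,j) \<in> Kedges n then of_int (x i * x j) else 0)"

definition CUTn :: "nat \<Rightarrow> (nat \<times> nat \<Rightarrow> real) set" where
  "CUTn n = {y. \<exists>l :: (nat \<Rightarrow> int) \<Rightarrow> real. (\<forall>x\<in>signs n. l x \<ge> 0) \<and> (\<Sum>x\<in>signs n. l x) = 1
               \<and> y = (\<lambda>e. \<Sum>x\<in>signs n. l x * cutvec n x e)}"

text \<open>Points of R^{E_n}: functions vanishing outside E_n.\<close>
definition space_on :: "(nat \<times> nat) set \<Rightarrow> (nat \<times> nat \<Rightarrow> real) set" where
  "space_on E = {y. \<forall>e. e \<notin> E \<longrightarrow> y e = 0}"

definition valid_ineq :: "nat \<Rightarrow> (nat \<times> nat \<Rightarrow> real) \<Rightarrow> real \<Rightarrow> bool" where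
  "valid_ineq n w \<alpha> \<longleftrightarrow> (\<forall>y\<in>CUTn n. (\<Sum>e\<in>Kedges n. w e * y e) \<le> \<alpha>)"

definition support_nodes :: "nat \<Rightarrow> (nat \<times> nat \<Rightarrow> real) \<Rightarrow> nat set" where
  "support_nodes n w = {v. \<exists>(i,j)\<in>Kedges n. w (i,j) \<noteq> 0 \<and> (v = i \<or> v = j)}"

definition Rk :: "nat \<Rightarrow> nat \<Rightarrow> (nat \<times> nat \<Rightarrow> real) set" where
  "Rk k n = {y \<in> space_on (Kedges n). \<forall>w \<alpha>. w \<in> space_on (Kedges n) \<and> valid_ineq n w \<alpha>
               \<and> card (support_nodes n w) \<le> k \<longrightarrow> (\<Sum>e\<in>Kedges n. w e * y e) \<le> \<alpha>}"

definition proj :: "(nat \<times> nat) set \<Rightarrow> (nat \<times> nat \<Rightarrow> real) \<Rightarrow> (nat \<times> nat \<Rightarrow> real)" where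
  "proj E y = (\<lambda>e. if e \<in> E then y e else 0)"

definition CUT :: "nat \<Rightarrow> (nat \<times> nat) set \<Rightarrow> (nat \<times> nat \<Rightarrow> real) set" where
  "CUT n E = proj E ` CUTn n"

definition RkG :: "nat \<Rightarrow> nat \<Rightarrow> (nat \<times> nat) set \<Rightarrow> (nat \<times> nat \<Rightarrow> real) set" where
  "RkG k n E = proj E ` Rk k n"

definition in_Gk :: "nat \<Rightarrow> nat \<Rightarrow> (nat \<times> nat) set \<Rightarrow> bool" where
  "in_Gk k n E \<longleftrightarrow> is_graph n E \<and> CUT n E = RkG k n E"

end

theory Submission
  imports Defs
begin



definition dotN :: "nat \<Rightarrow> (nat \<Rightarrow> real) \<Rightarrow> (nat \<Rightarrow> real) \<Rightarrow> real" where
  "dotN N f g = (\<Sum>t<N. f t * g t)"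

lemma dotN_comm: "dotN N f g = dotN N g f"
  by (simp add: dotN_def mult.commute)

lemma dotN_cong: "(\<And>t. t < N \<Longrightarrow> f t = f' t) \<Longrightarrow> dotN N f g = dotN N f' g"
  by (simp add: dotN_def)

lemma dotN_diff: "dotN N (\<lambda>t. a t - b t) g = dotN N a g - dotN N b g"
  by (simp add: dotN_def left_diff_distrib sum_subtractf)

lemma dotN_add: "dotN N (\<lambda>t. a t + b t) g = dotN N a g + dotN N b g"
  by (simp add: dotN_def distrib_right sum.distrib)

lemma dotN_sum: "dotN N (\<lambda>t. \<Sum>l\<in>A. c l * F l t) g = (\<Sum>l\<in>A. c l * dotN N (F l) g)"
  by (simp add: dotN_def sum_distrib_left sum_distrib_right sum.swap[of _ A] mult.assoc)

lemma dotN_div: "dotN N (\<lambda>t. f t / s) g = dotN N f g / s"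
  by (simp add: dotN_def sum_divide_distrib)

lemma dotN_zero[simp]: "dotN N (\<lambda>_. 0) g = 0" "dotN N g (\<lambda>_. 0) = 0"
  by (simp_all add: dotN_def)

lemma dotN_self_ge: "0 \<le> dotN N f f"
  by (simp add: dotN_def sum_nonneg)

lemma dotN_self_0: "dotN N f f = 0 \<Longrightarrow> t < N \<Longrightarrow> f t = 0"
  unfolding dotN_def by (subst (asm) sum_nonneg_eq_0_iff) auto

definition gsnext :: "nat \<Rightarrow> (nat \<Rightarrow> nat \<Rightarrow> real) \<Rightarrow> nat \<Rightarrow> (nat \<Rightarrow> nat \<Rightarrow> real) \<Rightarrow> (nat \<Rightarrow> real)" where
  "gsnext N U j F = (let r = (\<lambda>t. U j t - (\<Sum>l<j. dotN N (U j) (F l) * F l t)) in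
     if dotN N r r = 0 then (\<lambda>_. 0) else (\<lambda>t. r t / sqrt (dotN N r r)))"

primrec GS :: "nat \<Rightarrow> (nat \<Rightarrow> nat \<Rightarrow> real) \<Rightarrow> nat \<Rightarrow> (nat \<Rightarrow> nat \<Rightarrow> real)" where
  "GS N U 0 = (\<lambda>_ _. 0)"
| "GS N U (Suc j) = (GS N U j)(j := gsnext N U j (GS N U j))"

definition gsinv :: "nat \<Rightarrow> (nat \<Rightarrow> nat \<Rightarrow> real) \<Rightarrow> nat \<Rightarrow> (nat \<Rightarrow> nat \<Rightarrow> real) \<Rightarrow> bool" where
  "gsinv N U j F \<longleftrightarrow> (\<forall>l<j. F l = (\<lambda>_. 0) \<or> dotN N (F l) (F l) = 1)
     \<and> (\<forall>l<j. \<forall>l'<j. l \<noteq> l' \<longrightarrow> dotN N (F l) (F l') = 0)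
     \<and> (\<forall>i<j. \<forall>t<N. U i t = (\<Sum>l<Suc i. dotN N (U i) (F l) * F l t))"

lemma gs_step:
  assumes inv: "gsinv N U j F"
  defines "f \<equiv> gsnext N U j F"
  shows "gsinv N U (Suc j) (F(j := f))"
proof -
  define r where "r = (\<lambda>t. U j t - (\<Sum>l<j. dotN N (U j) (F l) * F l t))"
  define d where "d = dotN N r r"
  have f_def': "f = (if d = 0 then (\<lambda>_. 0) else (\<lambda>t. r t / sqrt d))"
    unfolding f_def gsnext_def r_def d_def Let_def ..
  have dpos: "d \<ge> 0" unfolding d_def by (rule dotN_self_ge)
  have I1: "\<forall>l<j. F l = (\<lambda>_. 0) \<or> dotN N (F l) (F l) = 1"
   and I2: "\<forall>l<j. \<forall>l'<j. l \<noteq> l' \<longrightarrow> dotN N (F l) (F l') = 0"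
   and I3: "\<forall>i<j. \<forall>t<N. U i t = (\<Sum>l<Suc i. dotN N (U i) (F l) * F l t)"
    using inv unfolding gsinv_def by auto
  have proj: "(\<Sum>l'<j. c l' * dotN N (F l') (F l)) = c l * dotN N (F l) (F l)" if "l < j" for c l
  proof -
    have "(\<Sum>l'<j. c l' * dotN N (F l') (F l)) = (\<Sum>l'<j. if l' = l then c l * dotN N (F l) (F l) else 0)"
      by (rule sum.cong) (use I2 that in auto)
    also have "\<dots> = c l * dotN N (F l) (F l)" using that by (simp add: sum.delta)
    finally show ?thesis .
  qed
  have rperp: "dotN N r (F l) = 0" if "l < j" for l
  proof -
    have "dotN N r (F l) = dotN N (U j) (F l) - (\<Sum>l'<j. dotN N (U j) (F l') * dotN N (F l') (F l))"
      unfolding r_def dotN_diff dotN_sum ..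
    also have "\<dots> = dotN N (U j) (F l) - dotN N (U j) (F l) * dotN N (F l) (F l)"
      using proj[OF that] by simp
    also have "\<dots> = 0" using I1 that by auto
    finally show ?thesis .
  qed
  have fperp: "dotN N f (F l) = 0" if "l < j" for l
    using rperp[OF that] by (simp add: f_def' dotN_div)
  have Ff: "dotN N (F l) f = 0" if "l < j" for l
    using fperp[OF that] dotN_comm[of N "F l" f] by simp
  have fdef2: "f = (\<lambda>t. r t / sqrt d)" if "d \<noteq> 0"
    using that f_def' by simp
  have rf: "dotN N r f = d / sqrt d" if "d \<noteq> 0"
  proof -
    have "dotN N r f = dotN N f r" by (rule dotN_comm)
    also have "\<dots> = dotN N (\<lambda>t. r t / sqrt d) r"
      using fdef2[OF that] by (rule arg_cong[where f="\<lambda>z. dotN N z r"])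
    also have "\<dots> = d / sqrt d" unfolding dotN_div d_def ..
    finally show ?thesis .
  qed
  have f1: "f = (\<lambda>_. 0) \<or> dotN N f f = 1"
  proof (cases "d = 0")
    case False
    have "dotN N f f = dotN N (\<lambda>t. r t / sqrt d) f"
      using fdef2[OF False] by (rule arg_cong[where f="\<lambda>z. dotN N z f"])
    also have "\<dots> = dotN N r f / sqrt d" by (rule dotN_div)
    also have "\<dots> = d / sqrt d / sqrt d" using rf[OF False] by simp
    also have "\<dots> = 1" using False dpos by (simp add: real_div_sqrt)
    finally show ?thesis by simp
  qed (simp add: f_def')
  have Uj: "U j t = (\<Sum>l<Suc j. dotN N (U j) ((F(j := f)) l) * (F(j := f)) l t)" if "t < N" for t
  proof -
    have s1: "(\<Sum>l<Suc j. dotN N (U j) ((F(j := f)) l) * (F(j := f)) l t)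
        = (\<Sum>l<j. dotN N (U j) (F l) * F l t) + dotN N (U j) f * f t"
      by (simp add: sum.lessThan_Suc)
    have rt: "dotN N (U j) f * f t = r t"
    proof (cases "d = 0")
      case True
      then show ?thesis using dotN_self_0[OF _ that, of r] by (simp add: f_def' d_def)
    next
      case False
      define S where "S = (\<lambda>t. \<Sum>l<j. dotN N (U j) (F l) * F l t)"
      have Ur: "U j = (\<lambda>t. r t + S t)" by (simp add: r_def S_def)
      have "dotN N (U j) f = dotN N r f + dotN N S f"
        unfolding Ur dotN_add ..
      also have "dotN N S f = (\<Sum>l<j. dotN N (U j) (F l) * dotN N (F l) f)"
        unfolding S_def by (rule dotN_sum)
      finally have "dotN N (U j) f = dotN N r f + (\<Sum>l<j. dotN N (U j) (F l) * dotN N (F l) f)" .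
      also have "(\<Sum>l<j. dotN N (U j) (F l) * dotN N (F l) f) = 0"
        using Ff by simp
      also have "dotN N r f = d / sqrt d"
        using rf[OF False] .
      finally have "dotN N (U j) f = sqrt d" using False dpos by (simp add: real_div_sqrt)
      then show ?thesis using False dpos by (simp add: f_def')
    qed
    show ?thesis using s1 rt by (simp add: r_def)
  qed
  show ?thesis
    unfolding gsinv_def
  proof (intro conjI allI impI)
    fix l assume "l < Suc j"
    then show "(F(j := f)) l = (\<lambda>_. 0) \<or> dotN N ((F(j := f)) l) ((F(j := f)) l) = 1"
      using I1 f1 by (cases "l = j") auto
  next
    fix l l' assume "l < Suc j" "l' < Suc j" "l \<noteq> l'"
    then show "dotN N ((F(j := f)) l) ((F(j := f)) l') = 0"
      using I2 fperp Ff by (auto simp: less_Suc_eq)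
  next
    fix i t assume i: "i < Suc j" and t: "t < N"
    show "U i t = (\<Sum>l<Suc i. dotN N (U i) ((F(j := f)) l) * (F(j := f)) l t)"
    proof (cases "i = j")
      case True then show ?thesis using Uj t by simp
    next
      case False
      then have "i < j" using i by simp
      then have "(\<Sum>l<Suc i. dotN N (U i) ((F(j := f)) l) * (F(j := f)) l t) = (\<Sum>l<Suc i. dotN N (U i) (F l) * F l t)"
        by (intro sum.cong) auto
      then show ?thesis using I3 \<open>i < j\<close> t by simp
    qed
  qed
qed

lemma gs_inv: "gsinv N U j (GS N U j)"
proof (induction j)
  case 0 then show ?case by (simp add: gsinv_def)
next
  case (Suc j) then show ?case unfolding GS.simps by (rule gs_step)
qed

lemma gram_reduce:
  fixes U :: "nat \<Rightarrow> nat \<Rightarrow> real"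
  shows "\<exists>V. (\<forall>p l. m \<le> l \<longrightarrow> V p l = 0) \<and>
     (\<forall>p<m. \<forall>q<m. (\<Sum>l<m. V p l * V q l) = dotN N (U p) (U q))"
proof -
  define F where "F = GS N U m"
  have I1: "\<forall>l<m. F l = (\<lambda>_. 0) \<or> dotN N (F l) (F l) = 1"
   and I2: "\<forall>l<m. \<forall>l'<m. l \<noteq> l' \<longrightarrow> dotN N (F l) (F l') = 0"
   and I3: "\<forall>i<m. \<forall>t<N. U i t = (\<Sum>l<Suc i. dotN N (U i) (F l) * F l t)"
    using gs_inv[of N U m] unfolding gsinv_def F_def by auto
  define V where "V p l = (if l \<le> p \<and> l < m then dotN N (U p) (F l) else 0)" for p l
  have Uexp: "U p t = (\<Sum>l<m. V p l * F l t)" if "p < m" "t < N" for p t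
  proof -
    have "(\<Sum>l<m. V p l * F l t) = (\<Sum>l<Suc p. V p l * F l t)"
      by (rule sum.mono_neutral_right) (use that in \<open>auto simp: V_def\<close>)
    also have "\<dots> = (\<Sum>l<Suc p. dotN N (U p) (F l) * F l t)"
      by (rule sum.cong) (use that in \<open>auto simp: V_def\<close>)
    finally show ?thesis using I3 that by simp
  qed
  have proj: "(\<Sum>l'<m. c l' * dotN N (F l') (F l)) = c l * dotN N (F l) (F l)" if "l < m" for c l
  proof -
    have "(\<Sum>l'<m. c l' * dotN N (F l') (F l)) = (\<Sum>l'<m. if l' = l then c l * dotN N (F l) (F l) else 0)"
      by (rule sum.cong) (use I2 that in auto)
    also have "\<dots> = c l * dotN N (F l) (F l)" using that by (simp add: sum.delta)
    finally show ?thesis .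
  qed
  have UF: "dotN N (U q) (F l) = V q l * dotN N (F l) (F l)" if "q < m" "l < m" for q l
  proof -
    have "dotN N (U q) (F l) = dotN N (\<lambda>t. \<Sum>l'<m. V q l' * F l' t) (F l)"
      by (rule dotN_cong) (use Uexp that in auto)
    also have "\<dots> = (\<Sum>l'<m. V q l' * dotN N (F l') (F l))" by (rule dotN_sum)
    finally show ?thesis using proj[OF that(2)] by simp
  qed
  have Vd: "V p l * dotN N (F l) (F l) = V p l" if "l < m" for p l
    using I1 that by (auto simp: V_def)
  have gram: "(\<Sum>l<m. V p l * V q l) = dotN N (U p) (U q)" if "p < m" "q < m" for p q
  proof -
    have "dotN N (U p) (U q) = dotN N (\<lambda>t. \<Sum>l<m. V p l * F l t) (U q)"
      by (rule dotN_cong) (use Uexp that in auto)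
    also have "\<dots> = (\<Sum>l<m. V p l * dotN N (F l) (U q))" by (rule dotN_sum)
    also have "\<dots> = (\<Sum>l<m. V p l * V q l)"
    proof (rule sum.cong, simp)
      fix l assume "l \<in> {..<m}"
      then have l: "l < m" by simp
      have "V p l * dotN N (F l) (U q) = V p l * (V q l * dotN N (F l) (F l))"
        using UF[OF that(2) l] by (simp add: dotN_comm)
      also have "\<dots> = (V p l * dotN N (F l) (F l)) * V q l" by simp
      also have "\<dots> = V p l * V q l" using Vd[OF l] by simp
      finally show "V p l * dotN N (F l) (U q) = V p l * V q l" .
    qed
    finally show ?thesis by simp
  qed
  have z: "\<forall>p l. m \<le> l \<longrightarrow> V p l = 0" by (simp add: V_def)
  show ?thesis
    by (rule exI[where x=V], rule conjI[OF z]) (simp add: gram)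
qed



lemma finite_Kedges[simp]: "finite (Kedges n)"
proof -
  have "Kedges n \<subseteq> {..<n} \<times> {..<n}" by (auto simp: Kedges_def)
  thus ?thesis by (rule finite_subset) auto
qed

lemma finite_signs[simp]: "finite (signs n)"
  by (simp add: signs_def finite_PiE)

lemma signs_ne[simp]: "signs n \<noteq> {}"
proof -
  have "restrict (\<lambda>i. 1) {..<n} \<in> signs n" by (auto simp: signs_def)
  thus ?thesis by blast
qed

lemma ip_ge: "x \<in> signs n \<Longrightarrow> (\<Sum>(i,j)\<in>E. w (i,j) * of_int (x i * x j)) \<le> ip n E w"
  unfolding ip_def by (rule Max_ge) auto

lemma ip_attained: "\<exists>x\<in>signs n. ip n E w = (\<Sum>(i,j)\<in>E. w (i,j) * of_int (x i * x j))"
proof -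
  have "ip n E w \<in> (\<lambda>x. \<Sum>(i,j)\<in>E. w (i,j) * of_int (x i * x j)) ` signs n"
    unfolding ip_def by (rule Max_in) auto
  thus ?thesis by auto
qed

lemma ip_le: "(\<And>x. x \<in> signs n \<Longrightarrow> (\<Sum>(i,j)\<in>E. w (i,j) * of_int (x i * x j)) \<le> c) \<Longrightarrow> ip n E w \<le> c"
  using ip_attained[of n E w] by auto

lemma signs_val: "x \<in> signs n \<Longrightarrow> i < n \<Longrightarrow> x i = 1 \<or> x i = -1"
  by (auto simp: signs_def)

lemma signs_out: "x \<in> signs n \<Longrightarrow> \<not> i < n \<Longrightarrow> x i = undefined"
  by (auto simp: signs_def PiE_def extensional_def)

lemma flip_signs:
  assumes x: "x \<in> signs n" and "i < n"
  shows "x(i := - x i) \<in> signs n"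
proof -
  have "x i = 1 \<or> x i = -1" using signs_val[OF x assms(2)] .
  then show ?thesis using x assms(2)
    by (auto simp: signs_def PiE_def extensional_def Pi_iff)
qed

lemma flip_sum0:
  assumes "i < n" and that: "j \<noteq> i"
  shows "(\<Sum>x\<in>signs n. of_int (x i * x j) :: real) = 0"
proof -
  let ?g = "\<lambda>x::nat\<Rightarrow>int. (of_int (x i * x j) :: real)"
  let ?phi = "\<lambda>x::nat\<Rightarrow>int. x(i := - x i)"
  have "(\<Sum>x\<in>signs n. ?g x) = (\<Sum>x\<in>signs n. ?g (?phi x))"
    by (rule sum.reindex_bij_witness[of _ ?phi ?phi]) (auto simp: flip_signs assms)
  also have "\<dots> = - (\<Sum>x\<in>signs n. ?g x)"
    using that by (simp add: sum_negf[symmetric])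
  finally show ?thesis by simp
qed

lemma ip_nonneg:
  assumes "E \<subseteq> Kedges n"
  shows "0 \<le> ip n E w"
proof -
  have fin: "finite E" using assms finite_Kedges finite_subset by blast
  have "(\<Sum>x\<in>signs n. \<Sum>(i,j)\<in>E. w (i,j) * of_int (x i * x j)) =
        (\<Sum>(i,j)\<in>E. w (i,j) * (\<Sum>x\<in>signs n. of_int (x i * x j)))"
    by (subst sum.swap) (simp add: case_prod_unfold sum_distrib_left)
  also have "\<dots> = 0"
  proof (rule sum.neutral, safe)
    fix i j assume "(i,j) \<in> E"
    then have "i < n" "j \<noteq> i" using assms by (auto simp: Kedges_def)
    then show "w (i,j) * (\<Sum>x\<in>signs n. of_int (x i * x j)) = 0"
      using flip_sum0 by simp
  qed
  finally have s0: "(\<Sum>x\<in>signs n. \<Sum>(i,j)\<in>E. w (i,j) * of_int (x i * x j)) = 0" .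
  show ?thesis
  proof (rule ccontr)
    assume "\<not> 0 \<le> ip n E w"
    then have "\<forall>x\<in>signs n. (\<Sum>(i,j)\<in>E. w (i,j) * of_int (x i * x j)) < 0"
      using ip_ge[where n=n and E=E and w=w] by force
    then have "(\<Sum>x\<in>signs n. \<Sum>(i,j)\<in>E. w (i,j) * of_int (x i * x j)) < (\<Sum>x\<in>signs n. 0)"
      by (intro sum_strict_mono) auto
    with s0 show False by simp
  qed
qed

definition val :: "nat \<Rightarrow> (nat \<times> nat) set \<Rightarrow> (nat \<times> nat \<Rightarrow> real) \<Rightarrow> (nat \<Rightarrow> nat \<Rightarrow> real) \<Rightarrow> real" where
  "val n E w u = (\<Sum>(i,j)\<in>E. w (i,j) * (\<Sum>k<n. u i k * u j k))"

lemma sdp_val: "sdp n E w = Sup (val n E w ` unit_systems n)"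
  unfolding sdp_def val_def ..

lemma unit_e0: "(\<lambda>i l. if l = 0 then 1 else 0) \<in> unit_systems n"
proof -
  have "(\<Sum>k<n. (if k = 0 then 1 else 0 :: real)\<^sup>2) = 1" if "0 < n" for n :: nat
  proof -
    have "(\<Sum>k<n. (if k = 0 then 1 else 0 :: real)\<^sup>2) = (\<Sum>k<n. (if k = 0 then 1 else 0 :: real))"
      by (rule sum.cong) auto
    also have "\<dots> = 1" using that by (simp add: sum.delta)
    finally show ?thesis .
  qed
  then show ?thesis by (auto simp: unit_systems_def)
qed

lemma unit_ne[simp]: "unit_systems n \<noteq> {}"
  using unit_e0 by blast

lemma abs_dot_le1:
  assumes "u \<in> unit_systems n" "i < n" "j < n"
  shows "\<bar>\<Sum>k<n. u i k * u j k\<bar> \<le> 1"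
proof -
  have "\<bar>\<Sum>k<n. u i k * u j k\<bar> \<le> (\<Sum>k<n. \<bar>u i k * u j k\<bar>)" by (rule sum_abs)
  also have "\<dots> \<le> (\<Sum>k<n. ((u i k)\<^sup>2 + (u j k)\<^sup>2) / 2)"
  proof (rule sum_mono)
    fix k
    have "0 \<le> (\<bar>u i k\<bar> - \<bar>u j k\<bar>)\<^sup>2" by simp
    then show "\<bar>u i k * u j k\<bar> \<le> ((u i k)\<^sup>2 + (u j k)\<^sup>2) / 2"
      by (simp add: power2_eq_square abs_mult algebra_simps)
  qed
  also have "\<dots> = ((\<Sum>k<n. (u i k)\<^sup>2) + (\<Sum>k<n. (u j k)\<^sup>2)) / 2"
    by (simp add: sum_divide_distrib sum.distrib add_divide_distrib)
  also have "\<dots> = 1" using assms by (simp add: unit_systems_def)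
  finally show ?thesis .
qed

lemma val_abs_le:
  assumes "E \<subseteq> Kedges n" "u \<in> unit_systems n"
  shows "\<bar>val n E w u\<bar> \<le> (\<Sum>e\<in>E. \<bar>w e\<bar>)"
proof -
  have fin: "finite E" using assms finite_Kedges finite_subset by blast
  have "\<bar>val n E w u\<bar> \<le> (\<Sum>(i,j)\<in>E. \<bar>w (i,j) * (\<Sum>k<n. u i k * u j k)\<bar>)"
    unfolding val_def case_prod_unfold by (rule sum_abs)
  also have "\<dots> \<le> (\<Sum>(i,j)\<in>E. \<bar>w (i,j)\<bar>)"
  proof (rule sum_mono, clarify)
    fix i j assume "(i,j) \<in> E"
    then have "i < n" "j < n" using assms by (auto simp: Kedges_def)
    then have "\<bar>\<Sum>k<n. u i k * u j k\<bar> \<le> 1" using abs_dot_le1 assms by blast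
    then show "\<bar>w (i,j) * (\<Sum>k<n. u i k * u j k)\<bar> \<le> \<bar>w (i,j)\<bar>"
      by (simp add: abs_mult mult_left_le)
  qed
  finally show ?thesis by (simp add: case_prod_unfold)
qed

lemma sdp_bdd:
  assumes "E \<subseteq> Kedges n"
  shows "bdd_above (val n E w ` unit_systems n)"
  using val_abs_le[OF assms] by (intro bdd_aboveI[where M="\<Sum>e\<in>E. \<bar>w e\<bar>"]) (force simp: abs_le_iff)

lemma sdp_ge:
  assumes "E \<subseteq> Kedges n" "u \<in> unit_systems n"
  shows "val n E w u \<le> sdp n E w"
  unfolding sdp_val using assms sdp_bdd[OF assms(1)] by (intro cSup_upper) auto

lemma sdp_le:
  assumes "\<And>u. u \<in> unit_systems n \<Longrightarrow> val n E w u \<le> c"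
  shows "sdp n E w \<le> c"
  unfolding sdp_val using assms by (intro cSup_least) auto

lemma sdp_zero: "sdp n E (\<lambda>_. 0) = 0"
proof -
  have "val n E (\<lambda>_. 0) ` unit_systems n = {0}" using unit_e0 by (auto simp: val_def)
  then show ?thesis by (simp add: sdp_val)
qed

lemma le_eps:
  fixes a b C :: real
  assumes "C > 0" "\<And>t. t > 0 \<Longrightarrow> a \<le> b + t * C"
  shows "a \<le> b"
proof (rule ccontr)
  assume "\<not> a \<le> b"
  then have "(a - b) / (2*C) > 0" using assms by simp
  from assms(2)[OF this] have "a \<le> b + (a - b) / 2" using assms(1) by simp
  with \<open>\<not> a \<le> b\<close> show False by (simp add: field_simps)
qed

lemma sum_lin:
  "(\<Sum>(i,j)\<in>E. (b (i,j) + t * c (i,j)) * z i j) = (\<Sum>(i,j)\<in>E. b (i,j) * z i j) + t * (\<Sum>(i,j)\<in>E. c (i,j) * z i j)"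
  for z :: "nat \<Rightarrow> nat \<Rightarrow> real"
  by (simp add: algebra_simps sum.distrib sum_distrib_left case_prod_unfold)

lemma kappa_val:
  assumes E: "E \<subseteq> Kedges n" "E \<noteq> {}"
    and K: "\<And>w. sdp n E w / ip n E w \<le> K0" "0 \<le> K0"
    and u: "u \<in> unit_systems n"
  shows "val n E b u \<le> K0 * ip n E b"
proof -
  have fin: "finite E" using E finite_Kedges finite_subset by blast
  obtain x where x: "x \<in> signs n" and ipx: "ip n E b = (\<Sum>(i,j)\<in>E. b (i,j) * of_int (x i * x j))"
    using ip_attained by blast
  define c :: "nat \<times> nat \<Rightarrow> real" where "c e = of_int (x (fst e) * x (snd e))" for e
  define M where "M = real (card E)"
  have Mpos: "M > 0" using fin E(2) by (simp add: M_def card_gt_0_iff)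
  have ij: "i < n" "j < n" if "(i,j) \<in> E" for i j using that E(1) by (auto simp: Kedges_def)
  have pm: "y i = 1 \<or> y i = -1" if "y \<in> signs n" "i < n" for y i using signs_val that by blast
  have cx: "c (i,j) * of_int (x i * x j) = 1" if "(i,j) \<in> E" for i j
    using pm[OF x ij(1)[OF that]] pm[OF x ij(2)[OF that]] by (auto simp: c_def)
  have cy: "c (i,j) * of_int (y i * y j) \<le> 1" if "(i,j) \<in> E" "y \<in> signs n" for i j y
    using pm[OF x ij(1)[OF that(1)]] pm[OF x ij(2)[OF that(1)]]
      pm[OF that(2) ij(1)[OF that(1)]] pm[OF that(2) ij(2)[OF that(1)]] by (auto simp: c_def)
  have cabs: "(\<Sum>e\<in>E. \<bar>c e\<bar>) = M"
  proof -
    have "(\<Sum>e\<in>E. \<bar>c e\<bar>) = (\<Sum>e\<in>E. 1)"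
    proof (rule sum.cong, simp, clarify)
      fix i j assume ije: "(i,j) \<in> E"
      show "\<bar>c (i,j)\<bar> = 1"
        using pm[OF x ij(1)[OF ije]] pm[OF x ij(2)[OF ije]] by (cases "x i = 1"; cases "x j = 1") (auto simp: c_def)
    qed
    then show ?thesis by (simp add: M_def)
  qed
  have sumE1: "(\<Sum>(i,j)\<in>E. (1::real)) = M" by (simp add: M_def case_prod_unfold)
  have main: "val n E b u \<le> K0 * ip n E b + t * ((K0 + 1) * M)" if t: "t > 0" for t
  proof -
    define bt where "bt = (\<lambda>e. b e + t * c e)"
    have fy: "(\<Sum>(i,j)\<in>E. bt (i,j) * of_int (y i * y j)) = (\<Sum>(i,j)\<in>E. b (i,j) * of_int (y i * y j)) + t * (\<Sum>(i,j)\<in>E. c (i,j) * of_int (y i * y j))" for y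
      unfolding bt_def by (rule sum_lin)
    have "(\<Sum>(i,j)\<in>E. c (i,j) * of_int (x i * x j)) = M"
    proof -
      have "(\<Sum>(i,j)\<in>E. c (i,j) * of_int (x i * x j)) = (\<Sum>(i,j)\<in>E. (1::real))"
      proof (rule sum.cong, simp, clarify)
        fix i j assume "(i,j) \<in> E"
        then show "c (i,j) * of_int (x i * x j) = 1" by (rule cx)
      qed
      then show ?thesis using sumE1 by simp
    qed
    then have ip_lo: "ip n E bt \<ge> ip n E b + t * M"
      using ip_ge[OF x, where E=E and w=bt] fy[of x] ipx by simp
    have ip_hi: "ip n E bt \<le> ip n E b + t * M"
    proof (rule ip_le)
      fix y assume y: "y \<in> signs n"
      have "(\<Sum>(i,j)\<in>E. c (i,j) * of_int (y i * y j)) \<le> (\<Sum>(i,j)\<in>E. (1::real))"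
        by (rule sum_mono) (use cy y in auto)
      then show "(\<Sum>(i,j)\<in>E. bt (i,j) * of_int (y i * y j)) \<le> ip n E b + t * M"
        using fy[of y] ip_ge[OF y, where E=E and w=b] sumE1 t
        by (smt (verit, best) mult_left_mono)
    qed
    have ippos: "ip n E bt > 0" using ip_lo ip_nonneg[OF E(1), of b] t Mpos
      by (smt (verit) mult_pos_pos)
    have "sdp n E bt \<le> K0 * ip n E bt"
      using K(1)[of bt] ippos by (simp add: pos_divide_le_eq mult.commute)
    also have "\<dots> \<le> K0 * (ip n E b + t * M)" using ip_hi K(2) by (rule mult_left_mono)
    finally have s1: "sdp n E bt \<le> K0 * (ip n E b + t * M)" .
    have vlin: "val n E bt u = val n E b u + t * val n E c u"
      unfolding val_def bt_def by (rule sum_lin)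
    have "\<bar>val n E c u\<bar> \<le> M" using val_abs_le[OF E(1) u, of c] cabs by simp
    then have "val n E b u \<le> sdp n E bt + t * M"
      using vlin sdp_ge[OF E(1) u, of bt] t
      by (smt (verit, best) abs_le_iff mult_left_mono mult_minus_right)
    then show ?thesis using s1 by (simp add: algebra_simps)
  qed
  show ?thesis
    by (rule le_eps[where C="(K0 + 1) * M"]) (use main Mpos K(2) in auto)
qed



lemma reindex:
  fixes a :: "nat \<times> nat \<Rightarrow> real" and F :: "nat \<Rightarrow> nat \<Rightarrow> real"
  assumes mono: "\<And>p q. p < q \<Longrightarrow> q < m \<Longrightarrow> s p < s q"
    and img: "s ` {..<m} = S" and Sn: "S \<subseteq> {..<n}" and mk: "m \<le> k"
    and supp: "\<And>i j. (i,j) \<in> Kedges n \<Longrightarrow> a (i,j) \<noteq> 0 \<Longrightarrow> i \<in> S \<and> j \<in> S"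
  shows "(\<Sum>(i,j)\<in>Kedges n. a (i,j) * F i j) =
         (\<Sum>(p,q)\<in>Kedges k. (if q < m then a (s p, s q) else 0) * F (s p) (s q))"
proof -
  define T where "T = Kedges n \<inter> (S \<times> S)"
  define h where "h = (\<lambda>(p::nat,q::nat). (s p, s q))"
  have injs: "inj_on s {..<m}"
  proof (rule inj_onI)
    fix x y assume "x \<in> {..<m}" "y \<in> {..<m}" "s x = s y"
    then show "x = y" using mono[of x y] mono[of y x] by (cases x y rule: linorder_cases) auto
  qed
  have L: "(\<Sum>(i,j)\<in>Kedges n. a (i,j) * F i j) = (\<Sum>(i,j)\<in>T. a (i,j) * F i j)"
  proof (rule sum.mono_neutral_right)
    show "finite (Kedges n)" by simp
    show "T \<subseteq> Kedges n" by (auto simp: T_def)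
    show "\<forall>x\<in>Kedges n - T. (case x of (i, j) \<Rightarrow> a (i, j) * F i j) = 0"
    proof clarify
      fix i j assume "(i,j) \<in> Kedges n" "(i,j) \<notin> T"
      then have "a (i,j) = 0" using supp[of i j] by (auto simp: T_def)
      then show "a (i,j) * F i j = 0" by simp
    qed
  qed
  have R: "(\<Sum>(p,q)\<in>Kedges k. (if q < m then a (s p, s q) else 0) * F (s p) (s q)) =
           (\<Sum>(p,q)\<in>Kedges m. (if q < m then a (s p, s q) else 0) * F (s p) (s q))"
    by (rule sum.mono_neutral_right) (use mk in \<open>auto simp: Kedges_def split: if_splits intro: finite_Kedges[unfolded Kedges_def]\<close>)
  have R2: "(\<Sum>(p,q)\<in>Kedges m. (if q < m then a (s p, s q) else 0) * F (s p) (s q)) =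
            (\<Sum>pq\<in>Kedges m. (\<lambda>(i,j). a (i,j) * F i j) (h pq))"
    by (rule sum.cong) (auto simp: Kedges_def h_def)
  have bij: "bij_betw h (Kedges m) T"
  proof (rule bij_betw_imageI)
    show "inj_on h (Kedges m)"
      using injs by (auto simp: inj_on_def h_def Kedges_def)
    show "h ` Kedges m = T"
    proof
      show "h ` Kedges m \<subseteq> T"
        using mono img Sn by (auto simp: h_def Kedges_def T_def)
    next
      show "T \<subseteq> h ` Kedges m"
      proof clarify
        fix i j assume ij: "(i,j) \<in> T"
        then have "i \<in> S" "j \<in> S" "i < j" by (auto simp: T_def Kedges_def)
        then obtain p q where p: "p < m" "s p = i" and q: "q < m" "s q = j" using img by auto
        have "p < q"
        proof (rule ccontr)
          assume "\<not> p < q"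
          then have "q \<le> p" by simp
          then have "s q \<le> s p" using mono[of q p] p by (cases "q = p") auto
          then show False using p q \<open>i < j\<close> by simp
        qed
        then show "(i,j) \<in> h ` Kedges m" using p q by (auto simp: h_def Kedges_def)
      qed
    qed
  qed
  show ?thesis
    unfolding L R R2 using sum.reindex_bij_betw[OF bij, of "\<lambda>(i,j). a (i,j) * F i j"] by simp
qed

lemma cutvec_in: "x \<in> signs n \<Longrightarrow> cutvec n x \<in> CUTn n"
proof -
  assume x: "x \<in> signs n"
  define l where "l y = (if y = x then 1 else 0 :: real)" for y :: "nat \<Rightarrow> int"
  have "(\<lambda>e. \<Sum>y\<in>signs n. l y * cutvec n y e) = cutvec n x"
  proof
    fix e
    have "(\<Sum>y\<in>signs n. l y * cutvec n y e) = (\<Sum>y\<in>signs n. if y = x then cutvec n y e else 0)"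
      by (rule sum.cong) (auto simp: l_def)
    also have "\<dots> = cutvec n x e" using x by (simp add: sum.delta')
    finally show "(\<Sum>y\<in>signs n. l y * cutvec n y e) = cutvec n x e" .
  qed
  moreover have "(\<Sum>y\<in>signs n. l y) = 1" using x by (simp add: l_def sum.delta')
  moreover have "\<forall>y\<in>signs n. l y \<ge> 0" by (simp add: l_def)
  ultimately show ?thesis unfolding CUTn_def by (intro CollectI exI[of _ l]) auto
qed

lemma sum_cutvec: "(\<Sum>e\<in>Kedges n. a e * cutvec n x e) = (\<Sum>(i,j)\<in>Kedges n. a (i,j) * of_int (x i * x j))"
  by (rule sum.cong) (auto simp: cutvec_def)

lemma valid_ip: "valid_ineq n a \<alpha> \<Longrightarrow> ip n (Kedges n) a \<le> \<alpha>"
  unfolding valid_ineq_def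
  by (rule ip_le) (metis cutvec_in sum_cutvec)

lemma transfer:
  assumes K: "\<And>w. sdp k (Kedges k) w / ip k (Kedges k) w \<le> K0" "0 \<le> K0" and k2: "k \<ge> 2"
    and valid: "valid_ineq n a \<alpha>" and card: "card (support_nodes n a) \<le> k"
    and u: "u \<in> unit_systems n"
  shows "(\<Sum>(i,j)\<in>Kedges n. a (i,j) * dotN n (u i) (u j)) \<le> K0 * \<alpha>"
proof -
  define S where "S = support_nodes n a"
  have Sn: "S \<subseteq> {..<n}" by (auto simp: S_def support_nodes_def Kedges_def)
  have finS: "finite S" using Sn finite_subset by blast
  define m where "m = card S"
  have mk: "m \<le> k" using card by (simp add: m_def S_def)
  define s where "s p = sorted_list_of_set S ! p" for p
  have len: "length (sorted_list_of_set S) = m" using finS by (simp add: m_def)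
  have mono: "s p < s q" if "p < q" "q < m" for p q
    unfolding s_def using sorted_wrt_nth_less[OF strict_sorted_list_of_set[of S] that(1)] that len by (simp add: m_def)
  have img: "s ` {..<m} = S"
  proof -
    have "s ` {..<m} = set (sorted_list_of_set S)"
      using len by (auto simp: s_def in_set_conv_nth)
    then show ?thesis using finS by simp
  qed
  have sS: "s p \<in> S" if "p < m" for p using img that by auto
  have supp: "i \<in> S \<and> j \<in> S" if "(i,j) \<in> Kedges n" "a (i,j) \<noteq> 0" for i j
    using that unfolding S_def support_nodes_def by blast
  define b where "b = (\<lambda>(p,q). if q < m then a (s p, s q) else 0)"
  have RI: "(\<Sum>(i,j)\<in>Kedges n. a (i,j) * F i j) = (\<Sum>(p,q)\<in>Kedges k. b (p,q) * F (s p) (s q))" for F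
    unfolding b_def using reindex[OF mono img Sn mk supp] by simp
  obtain V where V0: "\<And>p l. m \<le> l \<Longrightarrow> V p l = 0"
    and VG: "\<And>p q. p < m \<Longrightarrow> q < m \<Longrightarrow> (\<Sum>l<m. V p l * V q l) = dotN n (u (s p)) (u (s q))"
    using gram_reduce[of m n "\<lambda>p. u (s p)"] by blast
  define v where "v p = (if p < m then V p else (\<lambda>l. if l = 0 then 1 else 0))" for p
  have vk: "(\<Sum>l<k. v p l * v q l) = dotN n (u (s p)) (u (s q))" if "p < m" "q < m" for p q
  proof -
    have "(\<Sum>l<k. v p l * v q l) = (\<Sum>l<k. V p l * V q l)" using that by (simp add: v_def)
    also have "\<dots> = (\<Sum>l<m. V p l * V q l)"
      by (rule sum.mono_neutral_right) (use that mk V0 in auto)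
    finally show ?thesis using VG that by simp
  qed
  have vunit: "v \<in> unit_systems k"
    unfolding unit_systems_def
  proof (intro CollectI allI impI)
    fix p assume p: "p < k"
    show "(\<Sum>l<k. (v p l)\<^sup>2) = 1"
    proof (cases "p < m")
      case True
      have "(\<Sum>l<k. (v p l)\<^sup>2) = dotN n (u (s p)) (u (s p))"
        using vk[OF True True] by (simp add: power2_eq_square)
      also have "\<dots> = 1" using u sS[OF True] Sn
        by (auto simp: dotN_def unit_systems_def power2_eq_square)
      finally show ?thesis .
    next
      case False
      then show ?thesis using unit_e0[of k] p by (simp add: v_def unit_systems_def) blast
    qed
  qed
  have E: "Kedges k \<subseteq> Kedges k" "Kedges k \<noteq> {}"
    using k2 by (auto simp: Kedges_def) (metis Suc_1 Suc_le_lessD less_numeral_extra(1) order_less_le_trans zero_less_one)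
  have "(\<Sum>(i,j)\<in>Kedges n. a (i,j) * dotN n (u i) (u j)) = (\<Sum>(p,q)\<in>Kedges k. b (p,q) * dotN n (u (s p)) (u (s q)))"
    by (rule RI)
  also have "\<dots> = val k (Kedges k) b v"
    unfolding val_def
  proof (rule sum.cong, simp, clarify)
    fix p q assume "(p,q) \<in> Kedges k"
    then have "p < q" by (simp add: Kedges_def)
    show "b (p,q) * dotN n (u (s p)) (u (s q)) = b (p,q) * (\<Sum>l<k. v p l * v q l)"
      using vk[of p q] \<open>p < q\<close> by (cases "q < m") (auto simp: b_def)
  qed
  also have "\<dots> \<le> K0 * ip k (Kedges k) b"
    by (rule kappa_val[OF E K vunit])
  also have "ip k (Kedges k) b \<le> ip n (Kedges n) a"
  proof (rule ip_le)
    fix x' assume x': "x' \<in> signs k"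
    define x where "x i = (if i < n then (if i \<in> S then x' (inv_into {..<m} s i) else 1) else undefined)" for i
    have injs: "inj_on s {..<m}"
    proof (rule inj_onI)
      fix x y assume "x \<in> {..<m}" "y \<in> {..<m}" "s x = s y"
      then show "x = y" using mono[of x y] mono[of y x] by (cases x y rule: linorder_cases) auto
    qed
    have xs: "x (s p) = x' p" if "p < m" for p
      using sS[OF that] Sn inv_into_f_f[OF injs, of p] that by (auto simp: x_def)
    have x: "x \<in> signs n"
    proof -
      have "x i \<in> {-1, 1}" if "i < n" for i
      proof (cases "i \<in> S")
        case True
        then have "inv_into {..<m} s i \<in> {..<m}" using True img inv_into_into[of i s "{..<m}"] by simp
        then have "inv_into {..<m} s i < k" using mk by auto
        then show ?thesis using True that x' by (auto simp: x_def signs_def)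
      qed (use that in \<open>simp add: x_def\<close>)
      then have h: "\<forall>i\<in>{..<n}. x i \<in> {-1, 1}" by blast
      have e: "x \<in> extensional {..<n}" by (simp add: extensional_def x_def)
      show ?thesis unfolding signs_def PiE_iff using h e by blast
    qed
    have "(\<Sum>(p,q)\<in>Kedges k. b (p,q) * of_int (x' p * x' q)) = (\<Sum>(p,q)\<in>Kedges k. b (p,q) * of_int (x (s p) * x (s q)))"
    proof (rule sum.cong, simp, clarify)
      fix p q assume "(p,q) \<in> Kedges k"
      then have "p < q" by (simp add: Kedges_def)
      show "b (p,q) * of_int (x' p * x' q) = b (p,q) * of_int (x (s p) * x (s q))"
        using xs[of p] xs[of q] \<open>p < q\<close> by (cases "q < m") (auto simp: b_def)
    qed
    also have "\<dots> = (\<Sum>(i,j)\<in>Kedges n. a (i,j) * of_int (x i * x j))"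
      by (rule RI[symmetric])
    also have "\<dots> \<le> ip n (Kedges n) a" by (rule ip_ge[OF x])
    finally show "(\<Sum>(p,q)\<in>Kedges k. b (p,q) * of_int (x' p * x' q)) \<le> ip n (Kedges n) a" .
  qed
  then have "K0 * ip k (Kedges k) b \<le> K0 * \<alpha>"
    using valid_ip[OF valid] K(2) by (meson mult_left_mono order_trans)
  finally show ?thesis .
qed



lemma cut_value_le:
  assumes E: "E \<subseteq> Kedges n" and y: "y \<in> CUTn n"
  shows "(\<Sum>e\<in>E. w e * y e) \<le> ip n E w"
proof -
  obtain l where l0: "\<forall>x\<in>signs n. l x \<ge> 0" and l1: "(\<Sum>x\<in>signs n. l x) = 1"
    and yl: "y = (\<lambda>e. \<Sum>x\<in>signs n. l x * cutvec n x e)"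
    using y unfolding CUTn_def by blast
  have "(\<Sum>e\<in>E. w e * y e) = (\<Sum>x\<in>signs n. l x * (\<Sum>e\<in>E. w e * cutvec n x e))"
    unfolding yl by (simp add: sum_distrib_left sum_distrib_right sum.swap[of _ E] algebra_simps)
  also have "\<dots> \<le> (\<Sum>x\<in>signs n. l x * ip n E w)"
  proof (rule sum_mono)
    fix x assume x: "x \<in> signs n"
    have "(\<Sum>e\<in>E. w e * cutvec n x e) = (\<Sum>(i,j)\<in>E. w (i,j) * of_int (x i * x j))"
      by (rule sum.cong) (use E in \<open>auto simp: cutvec_def\<close>)
    also have "\<dots> \<le> ip n E w" by (rule ip_ge[OF x])
    finally show "l x * (\<Sum>e\<in>E. w e * cutvec n x e) \<le> l x * ip n E w"
      using l0 x by (simp add: mult_left_mono)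
  qed
  also have "\<dots> = ip n E w" using l1 by (simp add: sum_distrib_right[symmetric])
  finally show ?thesis .
qed

lemma part1:
  assumes k2: "k \<ge> 2" and G: "in_Gk k n E"
  shows "kappa n E \<le> kappa k (Kedges k)"
proof -
  have ratio_le: "ereal (sdp k (Kedges k) w / ip k (Kedges k) w) \<le> kappa k (Kedges k)" for w
    unfolding kappa_def by (rule SUP_upper) simp
  show ?thesis
  proof (cases "kappa k (Kedges k)")
    case PInf then show ?thesis by simp
  next
    case MInf then show ?thesis using ratio_le[of "\<lambda>_. 0"] by simp
  next
    case (real K0)
    have K: "sdp k (Kedges k) w / ip k (Kedges k) w \<le> K0" for w
      using ratio_le[of w] real by simp
    have K0: "0 \<le> K0" using K[of "\<lambda>_. 0"] by (simp add: sdp_zero)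
    have En: "E \<subseteq> Kedges n" using G by (simp add: in_Gk_def is_graph_def)
    have cut: "CUT n E = RkG k n E" using G by (simp add: in_Gk_def)
    have "kappa n E \<le> ereal K0"
      unfolding kappa_def
    proof (rule SUP_least)
      fix w
      have ip0: "0 \<le> ip n E w" by (rule ip_nonneg[OF En])
      have "sdp n E w / ip n E w \<le> K0"
      proof (cases "ip n E w = 0")
        case True then show ?thesis using K0 by simp
      next
        case False
        then have ippos: "ip n E w > 0" using ip0 by simp
        have "sdp n E w \<le> K0 * ip n E w"
        proof (rule sdp_le)
          fix u assume u: "u \<in> unit_systems n"
          have step: "val n E w u \<le> K0 * ip n E w + t * ip n E w" if t: "t > 0" for t
          proof -
            define c where "c = K0 + t"
            have c: "c > 0" using K0 t by (simp add: c_def)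
            define z where "z e = (if e \<in> Kedges n then dotN n (u (fst e)) (u (snd e)) / c else 0)" for e
            have zR: "z \<in> Rk k n"
              unfolding Rk_def
            proof (intro CollectI conjI allI impI)
              show "z \<in> space_on (Kedges n)" by (simp add: space_on_def z_def)
            next
              fix w' \<alpha>
              assume H: "w' \<in> space_on (Kedges n) \<and> valid_ineq n w' \<alpha> \<and> card (support_nodes n w') \<le> k"
              have a0: "0 \<le> \<alpha>" using valid_ip[of n w' \<alpha>] H ip_nonneg[of "Kedges n" n w'] by simp
              have "(\<Sum>e\<in>Kedges n. w' e * z e) = (\<Sum>(i,j)\<in>Kedges n. w' (i,j) * dotN n (u i) (u j)) / c"
                by (simp add: z_def sum_divide_distrib case_prod_unfold)
              also have "\<dots> \<le> K0 * \<alpha> / c"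
                using transfer[OF K K0 k2 _ _ u, of w' \<alpha>] H c by (simp add: divide_right_mono)
              also have "\<dots> \<le> \<alpha>"
              proof -
                have "K0 * \<alpha> \<le> c * \<alpha>" using a0 t by (simp add: c_def mult_right_mono)
                then show ?thesis using c by (simp add: pos_divide_le_eq mult.commute)
              qed
              finally show "(\<Sum>e\<in>Kedges n. w' e * z e) \<le> \<alpha>" .
            qed
            then have "proj E z \<in> CUT n E" unfolding cut RkG_def by blast
            then obtain y where y: "y \<in> CUTn n" and pz: "proj E z = proj E y"
              unfolding CUT_def by blast
            have zy: "z e = y e" if "e \<in> E" for e
              using fun_cong[OF pz, of e] that by (simp add: proj_def)
            have "val n E w u / c = (\<Sum>e\<in>E. w e * z e)"
              unfolding val_def sum_divide_distrib case_prod_unfold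
            proof (rule sum.cong, simp)
              fix e assume "e \<in> E"
              then have "e \<in> Kedges n" using En by blast
              then show "w (fst e, snd e) * (\<Sum>k<n. u (fst e) k * u (snd e) k) / c = w e * z e"
                by (simp add: z_def dotN_def)
            qed
            also have "\<dots> = (\<Sum>e\<in>E. w e * y e)" using zy by simp
            also have "\<dots> \<le> ip n E w" by (rule cut_value_le[OF En y])
            finally have "val n E w u \<le> c * ip n E w" using c by (simp add: pos_divide_le_eq mult.commute)
            then show ?thesis by (simp add: c_def algebra_simps)
          qed
          show "val n E w u \<le> K0 * ip n E w"
            by (rule le_eps[where C="ip n E w"]) (use ippos step in auto)
        qed
        then show ?thesis using ippos by (simp add: pos_divide_le_eq mult.commute)
      qed
      then show "ereal (sdp n E w / ip n E w) \<le> ereal K0" by simp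
    qed
    then show ?thesis using real by simp
  qed
qed



lemma simplex_compact:
  fixes P :: "'a set"
  assumes "finite P"
  shows "compact ({l :: 'a \<Rightarrow> real. \<forall>x. l x \<in> (if x \<in> P then {0..1} else {0})} \<inter> {l. (\<Sum>x\<in>P. l x) = 1})"
proof -
  define B where "B = PiE UNIV (\<lambda>x. if x \<in> P then {0..1::real} else {0})"
  have "compactin (product_topology (\<lambda>_. euclidean) UNIV) B"
    unfolding B_def by (subst compactin_PiE) auto
  then have cB: "compact B" by (simp add: euclidean_product_topology)
  have B: "B = {l :: 'a \<Rightarrow> real. \<forall>x. l x \<in> (if x \<in> P then {0..1} else {0})}"
    by (auto simp: B_def PiE_def Pi_iff split: if_splits; metis atLeastAtMost_iff singletonD)
  have "closed {l :: 'a \<Rightarrow> real. (\<Sum>x\<in>P. l x) = 1}"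
    by (rule closed_Collect_eq) (intro continuous_intros continuous_on_product_coordinates)+
  then show ?thesis using cB B by blast
qed

lemma small_t:
  fixes a C :: real
  assumes C: "C \<ge> 0" and H: "\<And>t. 0 < t \<Longrightarrow> t \<le> 1 \<Longrightarrow> 2 * a \<le> t * C"
  shows "a \<le> 0"
proof (rule ccontr)
  assume "\<not> a \<le> 0"
  then have a: "a > 0" by simp
  define t where "t = min 1 (a / (C + 1))"
  have t0: "0 < t" using a C by (simp add: t_def)
  have t1: "t \<le> 1" by (simp add: t_def)
  have "t \<le> a / (C + 1)" by (simp add: t_def)
  then have "t * C \<le> a / (C + 1) * C" using C by (rule mult_right_mono)
  also have "\<dots> \<le> a" using a C by (simp add: field_simps)
  finally have "t * C \<le> a" .
  with H[OF t0 t1] a show False by simp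
qed

lemma separation:
  assumes ysp: "y \<in> space_on (Kedges n)"
    and H: "\<And>w \<alpha>. w \<in> space_on (Kedges n) \<Longrightarrow> valid_ineq n w \<alpha> \<Longrightarrow> (\<Sum>e\<in>Kedges n. w e * y e) \<le> \<alpha>"
  shows "y \<in> CUTn n"
proof (rule ccontr)
  assume ny: "y \<notin> CUTn n"
  define P where "P = signs n"
  define D where "D = Kedges n"
  have finP: "finite P" by (simp add: P_def)
  define \<Delta> where "\<Delta> = {l :: (nat \<Rightarrow> int) \<Rightarrow> real. \<forall>x. l x \<in> (if x \<in> P then {0..1} else {0})} \<inter> {l. (\<Sum>x\<in>P. l x) = 1}"
  define pt where "pt l = (\<lambda>e. \<Sum>x\<in>P. l x * cutvec n x e)" for l
  define h where "h l = (\<Sum>e\<in>D. (y e - pt l e)\<^sup>2)" for l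
  have cD: "compact \<Delta>" unfolding \<Delta>_def by (rule simplex_compact[OF finP])
  obtain x0 where x0: "x0 \<in> P" using signs_ne[of n] unfolding P_def by blast
  have ne: "\<Delta> \<noteq> {}"
  proof -
    have "(\<lambda>x. if x = x0 then 1 else 0) \<in> \<Delta>" using x0 finP by (auto simp: \<Delta>_def sum.delta')
    then show ?thesis by blast
  qed
  have conth: "continuous_on \<Delta> h"
    unfolding h_def pt_def
    by (intro continuous_intros) (auto intro: continuous_on_subset[OF continuous_on_product_coordinates])
  obtain ls where ls: "ls \<in> \<Delta>" and lmin: "\<And>l. l \<in> \<Delta> \<Longrightarrow> h ls \<le> h l"
    using continuous_attains_inf[OF cD ne conth] by blast
  define c where "c = pt ls"
  have ls0: "\<forall>x\<in>P. ls x \<ge> 0" and ls1: "(\<Sum>x\<in>P. ls x) = 1"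
    using ls by (auto simp: \<Delta>_def) (metis atLeastAtMost_iff)
  have cC: "c \<in> CUTn n" unfolding CUTn_def c_def pt_def using ls0 ls1 by (auto simp: P_def)
  have pt_out: "pt l e = 0" if "e \<notin> D" for l e
    using that by (simp add: pt_def cutvec_def D_def case_prod_unfold split: prod.splits)
  have "\<exists>e\<in>D. y e \<noteq> c e"
  proof (rule ccontr)
    assume "\<not> (\<exists>e\<in>D. y e \<noteq> c e)"
    then have "y = c"
    proof -
      assume A: "\<not> (\<exists>e\<in>D. y e \<noteq> c e)"
      show "y = c"
      proof
        fix e show "y e = c e"
        proof (cases "e \<in> D")
          case True then show ?thesis using A by blast
        next
          case False
          then have "y e = 0" using ysp unfolding space_on_def D_def by blast
          moreover have "c e = 0" using pt_out[OF False] by (simp add: c_def)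
          ultimately show ?thesis by simp
        qed
      qed
    qed
    then show False using ny cC by simp
  qed
  then obtain e0 where e0: "e0 \<in> D" "y e0 \<noteq> c e0" by blast
  define w where "w e = (if e \<in> D then y e - c e else 0)" for e
  define \<alpha> where "\<alpha> = (\<Sum>e\<in>D. w e * c e)"
  have vert: "(\<Sum>e\<in>D. w e * cutvec n x1 e) \<le> \<alpha>" if x1: "x1 \<in> P" for x1
  proof -
    define d where "d e = cutvec n x1 e - c e" for e
    have key: "2 * (\<Sum>e\<in>D. w e * d e) \<le> t * (\<Sum>e\<in>D. (d e)\<^sup>2)" if t: "0 < t" "t \<le> 1" for t
    proof -
      define lt where "lt x = (1 - t) * ls x + t * (if x = x1 then 1 else 0)" for x
      have lt\<Delta>: "lt \<in> \<Delta>"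
      proof -
        have "lt x \<in> (if x \<in> P then {0..1} else {0})" for x
        proof (cases "x \<in> P")
          case True
          have "ls x \<in> (if x \<in> P then {0..1} else {0})" using ls by (simp add: \<Delta>_def)
          then have "ls x \<in> {0..1}" using True by simp
          then show ?thesis using True t by (auto simp: lt_def) (smt (verit) mult_left_le mult_nonneg_nonneg)+
        next
          case False
          have "ls x \<in> (if x \<in> P then {0..1} else {0})" using ls by (simp add: \<Delta>_def)
          then have "ls x = 0" using False by simp
          then show ?thesis using False x1 by (auto simp: lt_def)
        qed
        moreover have "(\<Sum>x\<in>P. lt x) = 1"
          using ls1 x1 finP by (simp add: lt_def sum.distrib sum_distrib_left[symmetric] sum.delta')
        ultimately show ?thesis by (simp add: \<Delta>_def)
      qed
      have ptl: "pt lt e = c e + t * d e" for e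
      proof -
        have "pt lt e = (\<Sum>x\<in>P. (1 - t) * (ls x * cutvec n x e) + t * (if x = x1 then cutvec n x e else 0))"
          unfolding pt_def lt_def by (rule sum.cong) (auto simp: algebra_simps)
        also have "\<dots> = (1 - t) * (\<Sum>x\<in>P. ls x * cutvec n x e) + t * (\<Sum>x\<in>P. (if x = x1 then cutvec n x e else 0))"
          by (simp add: sum.distrib sum_distrib_left)
        also have "\<dots> = (1 - t) * c e + t * cutvec n x1 e"
          using x1 finP by (simp add: sum.delta c_def pt_def)
        also have "\<dots> = c e + t * d e" by (simp add: d_def algebra_simps)
        finally show ?thesis .
      qed
      have "h ls \<le> h lt" by (rule lmin[OF lt\<Delta>])
      moreover have "h lt = h ls - 2 * t * (\<Sum>e\<in>D. w e * d e) + t\<^sup>2 * (\<Sum>e\<in>D. (d e)\<^sup>2)"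
      proof -
        have "h lt = (\<Sum>e\<in>D. (y e - c e)\<^sup>2 - 2 * t * (w e * d e) + t\<^sup>2 * (d e)\<^sup>2)"
          unfolding h_def by (rule sum.cong) (auto simp: ptl w_def power2_eq_square algebra_simps)
        also have "\<dots> = h ls - 2 * t * (\<Sum>e\<in>D. w e * d e) + t\<^sup>2 * (\<Sum>e\<in>D. (d e)\<^sup>2)"
          by (simp add: h_def c_def sum.distrib sum_subtractf sum_distrib_left)
        finally show ?thesis .
      qed
      ultimately have "2 * t * (\<Sum>e\<in>D. w e * d e) \<le> t\<^sup>2 * (\<Sum>e\<in>D. (d e)\<^sup>2)" by simp
      then have "t * (2 * (\<Sum>e\<in>D. w e * d e)) \<le> t * (t * (\<Sum>e\<in>D. (d e)\<^sup>2))"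
        by (simp add: power2_eq_square algebra_simps)
      then show ?thesis using t by simp
    qed
    have "(\<Sum>e\<in>D. w e * d e) \<le> 0"
      by (rule small_t[OF _ key]) (auto simp: sum_nonneg)
    then show ?thesis
      by (simp add: d_def \<alpha>_def algebra_simps sum_subtractf)
  qed
  have valid: "valid_ineq n w \<alpha>"
    unfolding valid_ineq_def
  proof
    fix y' assume "y' \<in> CUTn n"
    then obtain l where l0: "\<forall>x\<in>signs n. l x \<ge> 0" and l1: "(\<Sum>x\<in>signs n. l x) = 1"
      and yl: "y' = (\<lambda>e. \<Sum>x\<in>signs n. l x * cutvec n x e)"
      unfolding CUTn_def by blast
    have "(\<Sum>e\<in>Kedges n. w e * y' e) = (\<Sum>x\<in>P. l x * (\<Sum>e\<in>D. w e * cutvec n x e))"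
      unfolding yl P_def D_def by (simp add: sum_distrib_left sum_distrib_right sum.swap[of _ "Kedges n"] algebra_simps)
    also have "\<dots> \<le> (\<Sum>x\<in>P. l x * \<alpha>)"
      by (rule sum_mono) (use l0 vert in \<open>auto simp: P_def intro: mult_left_mono\<close>)
    also have "\<dots> = \<alpha>" using l1 by (simp add: P_def sum_distrib_right[symmetric])
    finally show "(\<Sum>e\<in>Kedges n. w e * y' e) \<le> \<alpha>" .
  qed
  have wsp: "w \<in> space_on (Kedges n)" by (simp add: space_on_def w_def D_def)
  have "(\<Sum>e\<in>Kedges n. w e * y e) - \<alpha> = (\<Sum>e\<in>D. (w e)\<^sup>2)"
    by (simp add: \<alpha>_def D_def sum_subtractf[symmetric] w_def power2_eq_square algebra_simps)
  also have "\<dots> > 0"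
  proof -
    have "(w e0)\<^sup>2 > 0" using e0 by (simp add: w_def)
    moreover have "(w e0)\<^sup>2 \<le> (\<Sum>e\<in>D. (w e)\<^sup>2)"
      by (rule member_le_sum) (use e0 in \<open>auto simp: D_def\<close>)
    ultimately show ?thesis by linarith
  qed
  finally have "(\<Sum>e\<in>Kedges n. w e * y e) > \<alpha>" by simp
  with H[OF wsp valid] show False by simp
qed



lemma CUTn_space: "y \<in> CUTn n \<Longrightarrow> y \<in> space_on (Kedges n)"
  by (auto simp: CUTn_def space_on_def cutvec_def)

lemma support_card: "card (support_nodes n w) \<le> n"
proof -
  have "support_nodes n w \<subseteq> {..<n}" by (auto simp: support_nodes_def Kedges_def)
  then show ?thesis using card_mono[of "{..<n}"] by fastforce
qed

lemma part2: "in_Gk k k (Kedges k)"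
proof -
  have eq: "CUTn k = Rk k k"
  proof
    show "CUTn k \<subseteq> Rk k k"
      unfolding Rk_def valid_ineq_def using CUTn_space by blast
  next
    show "Rk k k \<subseteq> CUTn k"
    proof
      fix y assume y: "y \<in> Rk k k"
      show "y \<in> CUTn k"
      proof (rule separation)
        show "y \<in> space_on (Kedges k)" using y by (simp add: Rk_def)
        fix w \<alpha> assume "w \<in> space_on (Kedges k)" "valid_ineq k w \<alpha>"
        then show "(\<Sum>e\<in>Kedges k. w e * y e) \<le> \<alpha>"
          using y support_card[of k w] unfolding Rk_def by blast
      qed
    qed
  qed
  show ?thesis by (simp add: in_Gk_def is_graph_def CUT_def RkG_def eq)
qed

theorem mainTheorem9:
  fixes k :: nat
  assumes "k \<ge> 2"
  shows "(\<forall>n E. in_Gk k n E \<longrightarrow> kappa n E \<le> kappa k (Kedges k)) \<and> in_Gk k k (Kedges k)"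
  using part1[OF assms] part2 by blast

end
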